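(* Let $n\in\mathbb N$ and let $(M,d)$ be a pointed metric space with $d(x,y)\in\{0,1,\dots,n\}$ for all $x,y\in M$. Let $\mu\in ba(\widetilde M)$ be positive. The following are equivalent: (i) $\|\Phi^*\mu\|=\|\mu\|$. (ii) For every $\gamma\in(0,1)$ there exist $B\subseteq\widetilde M$ and $f\in B_{\mathrm{Lip}_0(M)}$ with $\mu(B)\ge\gamma\mu(\widetilde M)$ and $f(m_{x,y})=1$ for all $(x,y)\in B$. (iii) For every $\gamma\in(0,1)$ there exists a cyclically monotonic $B\subseteq\widetilde M$ with $\mu(B)\ge\gamma\mu(\widetilde M)$.
   Context: $M$ has base point $0$; $\mathrm{Lip}_0(M)$ is the real Banach space of Lipschitz $f\colon M\to\mathbb R$ with $f(0)=0$, normed by the best Lipschitz constant, with unit ball $B_{\mathrm{Lip}_0(M)}$. $\widetilde M=\{(x,y)\in M\times M:x\ne y\}$ and $f(m_{x,y})=(f(x)-f(y))/d(x,y)$. $ba(\widetilde M)$ is the Banach space of bounded finitely additive signed measures on the power set of $\widetilde M$ with norm $|\mu|(\widetilde M)$. $\Phi f(x,y)=(f(x)-f(y))/d(x,y)$ (de Leeuw map into $\ell_\infty(\widetilde M)$) and $(\Phi^*\mu)(f)=\int_{\widetilde M}\Phi f\,d\mu$. $B\subseteq\widetilde M$ is cyclically monotonic if for every finite sequence $(x_1,y_1),\dots,(x_k,y_k)\in B$, with $y_{k+1}=y_1$, $\sum_{i=1}^k d(x_i,y_{i+1})\ge\sum_{i=1}^k d(x_i,y_i)$. *)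

theory Defs
  imports "HOL-Analysis.Analysis"
begin

definition Mt :: "('a \<times> 'a) set" where
  "Mt = {(x, y). x \<noteq> y}"

definition deLeeuw :: "('a::metric_space \<Rightarrow> real) \<Rightarrow> 'a \<times> 'a \<Rightarrow> real" where
  "deLeeuw f = (\<lambda>(x, y). (f x - f y) / dist x y)"

definition Lip0_ball :: "'a::metric_space \<Rightarrow> ('a \<Rightarrow> real) set" where
  "Lip0_ball p = {f. f p = 0 \<and> 1-lipschitz_on UNIV f}"

definition Mt_partitions :: "('a \<times> 'a) set set set" where
  "Mt_partitions = {P. finite P \<and> \<Union>P = Mt \<and> {} \<notin> P \<and> disjoint P}"

text \<open>Positive bounded finitely additive measure on the power set of M~
  (positivity and finiteness of mu(M~) give boundedness).\<close>
definition positive_ba :: "(('a \<times> 'a) set \<Rightarrow> real) \<Rightarrow> bool" where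
  "positive_ba \<mu> \<longleftrightarrow> \<mu> {} = 0 \<and> (\<forall>A. A \<subseteq> Mt \<longrightarrow> 0 \<le> \<mu> A) \<and>
     (\<forall>A B. A \<subseteq> Mt \<longrightarrow> B \<subseteq> Mt \<longrightarrow> A \<inter> B = {} \<longrightarrow> \<mu> (A \<union> B) = \<mu> A + \<mu> B)"

definition ba_norm :: "(('a \<times> 'a) set \<Rightarrow> real) \<Rightarrow> real" where
  "ba_norm \<mu> = Sup {(\<Sum>A\<in>P. \<bar>\<mu> A\<bar>) | P. P \<in> Mt_partitions}"

text \<open>Integral of a bounded function against a positive finitely additive measure
  (supremum of lower sums over finite partitions; agrees with the Dunford--Schwartz
  integral for positive mu and bounded g).\<close>
definition ba_integral :: "(('a \<times> 'a) set \<Rightarrow> real) \<Rightarrow> ('a \<times> 'a \<Rightarrow> real) \<Rightarrow> real" where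
  "ba_integral \<mu> g = Sup {(\<Sum>A\<in>P. Inf (g ` A) * \<mu> A) | P. P \<in> Mt_partitions}"

definition Phi_star_norm :: "'a::metric_space \<Rightarrow> (('a \<times> 'a) set \<Rightarrow> real) \<Rightarrow> real" where
  "Phi_star_norm p \<mu> = Sup {\<bar>ba_integral \<mu> (deLeeuw f)\<bar> | f. f \<in> Lip0_ball p}"

definition cyclically_monotonic :: "('a::metric_space \<times> 'a) set \<Rightarrow> bool" where
  "cyclically_monotonic B \<longleftrightarrow> (\<forall>ps. set ps \<subseteq> B \<longrightarrow>
     (\<Sum>i<length ps. dist (fst (ps ! i)) (snd (ps ! i)))
       \<le> (\<Sum>i<length ps. dist (fst (ps ! i)) (snd (ps ! ((i + 1) mod length ps)))))"

end

theory Submission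
  imports Defs
begin


lemma pba_nonneg: "positive_ba \<mu> \<Longrightarrow> A \<subseteq> Mt \<Longrightarrow> 0 \<le> \<mu> A"
  by (simp add: positive_ba_def)

lemma pba_add: "positive_ba \<mu> \<Longrightarrow> A \<subseteq> Mt \<Longrightarrow> B \<subseteq> Mt \<Longrightarrow> A \<inter> B = {} \<Longrightarrow> \<mu> (A \<union> B) = \<mu> A + \<mu> B"
  by (simp add: positive_ba_def)

lemma pba_empty: "positive_ba \<mu> \<Longrightarrow> \<mu> {} = 0"
  by (simp add: positive_ba_def)

lemma pba_diff: "positive_ba \<mu> \<Longrightarrow> A \<subseteq> B \<Longrightarrow> B \<subseteq> Mt \<Longrightarrow> \<mu> (B - A) = \<mu> B - \<mu> A"
proof -
  assume a: "positive_ba \<mu>" "A \<subseteq> B" "B \<subseteq> Mt"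
  have "B = A \<union> (B - A)" using a by blast
  then have "\<mu> B = \<mu> A + \<mu> (B - A)" using pba_add[OF a(1), of A "B - A"] a by auto
  then show ?thesis by simp
qed

lemma pba_mono: "positive_ba \<mu> \<Longrightarrow> A \<subseteq> B \<Longrightarrow> B \<subseteq> Mt \<Longrightarrow> \<mu> A \<le> \<mu> B"
  using pba_diff[of \<mu> A B] pba_nonneg[of \<mu> "B - A"] by auto

lemma pba_sum:
  assumes "positive_ba \<mu>" "finite I" "\<And>i. i \<in> I \<Longrightarrow> F i \<subseteq> Mt"
    "\<And>i j. i \<in> I \<Longrightarrow> j \<in> I \<Longrightarrow> i \<noteq> j \<Longrightarrow> F i \<inter> F j = {}"
  shows "\<mu> (\<Union>i\<in>I. F i) = (\<Sum>i\<in>I. \<mu> (F i))"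
  using assms(2,3,4)
proof (induction I rule: finite_induct)
  case empty
  then show ?case using pba_empty[OF assms(1)] by simp
next
  case (insert a I)
  have "(\<Union>i\<in>insert a I. F i) = F a \<union> (\<Union>i\<in>I. F i)" by simp
  moreover have "F a \<inter> (\<Union>i\<in>I. F i) = {}" using insert.prems(2) insert.hyps(2) by blast
  moreover have "(\<Union>i\<in>I. F i) \<subseteq> Mt" using insert.prems(1) by blast
  ultimately have "\<mu> (\<Union>i\<in>insert a I. F i) = \<mu> (F a) + \<mu> (\<Union>i\<in>I. F i)"
    using pba_add[OF assms(1)] insert.prems(1) by simp
  also have "\<mu> (\<Union>i\<in>I. F i) = (\<Sum>i\<in>I. \<mu> (F i))"
    using insert.IH insert.prems by blast
  finally show ?case using insert.hyps by simp
qed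

lemma partition_sum:
  assumes "positive_ba \<mu>" "P \<in> Mt_partitions"
  shows "(\<Sum>A\<in>P. \<mu> A) = \<mu> Mt"
proof -
  have P: "finite P" "\<Union>P = Mt" "disjoint P" using assms(2) by (auto simp: Mt_partitions_def)
  have "\<mu> (\<Union>A\<in>P. A) = (\<Sum>A\<in>P. \<mu> A)"
    apply (rule pba_sum[OF assms(1) P(1)])
    using P by (auto simp: pairwise_def disjnt_def)
  then show ?thesis using P(2) by simp
qed

lemma partitions_ex: "\<exists>P. P \<in> Mt_partitions"
proof (cases "Mt = ({}::('a\<times>'a) set)")
  case True
  then show ?thesis by (intro exI[of _ "{}"]) (auto simp: Mt_partitions_def)
next
  case False
  then show ?thesis by (intro exI[of _ "{Mt}"]) (auto simp: Mt_partitions_def)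
qed

lemma ba_norm_eq:
  fixes \<mu> :: "('a \<times> 'a) set \<Rightarrow> real"
  assumes "positive_ba \<mu>"
  shows "ba_norm \<mu> = \<mu> Mt"
proof -
  have "{(\<Sum>A\<in>P. \<bar>\<mu> A\<bar>) | P. P \<in> Mt_partitions} = {\<mu> Mt}"
  proof -
    have "(\<Sum>A\<in>P. \<bar>\<mu> A\<bar>) = \<mu> Mt" if "P \<in> Mt_partitions" for P
    proof -
      have "\<And>A. A \<in> P \<Longrightarrow> \<bar>\<mu> A\<bar> = \<mu> A"
        proof -
        fix A assume "A \<in> P"
        then have "A \<subseteq> Mt" using that by (auto simp: Mt_partitions_def)
        then show "\<bar>\<mu> A\<bar> = \<mu> A" using pba_nonneg[OF assms] by simp
      qed
      then show ?thesis using partition_sum[OF assms that] by simp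
    qed
    moreover obtain P0 where "P0 \<in> (Mt_partitions :: (('a \<times> 'a) set set set))" using partitions_ex by blast
    ultimately show ?thesis by (auto intro!: exI[of _ P0])
  qed
  then show ?thesis by (simp add: ba_norm_def)
qed



definition lsum :: "(('a \<times> 'a) set \<Rightarrow> real) \<Rightarrow> ('a \<times> 'a \<Rightarrow> real) \<Rightarrow> ('a \<times> 'a) set set \<Rightarrow> real" where
  "lsum \<mu> g P = (\<Sum>A\<in>P. Inf (g ` A) * \<mu> A)"

lemma lsum_upper:
  assumes pos: "positive_ba \<mu>" and P: "P \<in> Mt_partitions"
    and gb: "\<And>z. z \<in> Mt \<Longrightarrow> -1 \<le> g z \<and> g z \<le> 1" and eta: "0 \<le> \<eta>"
  shows "lsum \<mu> g P \<le> \<mu> Mt - \<eta> * \<mu> (Mt - {z\<in>Mt. g z > 1 - \<eta>})"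
proof -
  define G where "G = {z\<in>Mt. g z > 1 - \<eta>}"
  have Pp: "finite P" "\<Union>P = Mt" "disjoint P" "{} \<notin> P" using P by (auto simp: Mt_partitions_def)
  have each: "Inf (g ` A) * \<mu> A \<le> \<mu> A - \<eta> * \<mu> (A - G)" if A: "A \<in> P" for A
  proof -
    have AM: "A \<subseteq> Mt" using A Pp by auto
    have ne: "A \<noteq> {}" using A Pp by auto
    have bdd: "bdd_below (g ` A)" using gb AM by (auto intro!: bdd_belowI[of _ "-1"])
    have mA: "0 \<le> \<mu> A" using pba_nonneg[OF pos AM] .
    show ?thesis
    proof (cases "A - G = {}")
      case True
      obtain a where a: "a \<in> A" using ne by auto
      have "Inf (g ` A) \<le> g a" using bdd a by (auto intro: cInf_lower)
      also have "\<dots> \<le> 1" using gb[OF subsetD[OF AM a]] by simp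
      finally have "Inf (g ` A) * \<mu> A \<le> 1 * \<mu> A" using mA by (intro mult_right_mono) auto
      moreover have "\<mu> (A - G) = 0" by (simp only: True pba_empty[OF pos])
      ultimately show ?thesis by simp
    next
      case False
      then obtain a where a: "a \<in> A" "a \<notin> G" by auto
      have "Inf (g ` A) \<le> g a" using bdd a by (auto intro: cInf_lower)
      also have "\<dots> \<le> 1 - \<eta>" using a AM by (auto simp: G_def)
      finally have "Inf (g ` A) * \<mu> A \<le> (1 - \<eta>) * \<mu> A" using mA by (intro mult_right_mono) auto
      moreover have "\<mu> (A - G) \<le> \<mu> A" using pba_mono[OF pos _ AM, of "A - G"] by auto
      then have "\<eta> * \<mu> (A - G) \<le> \<eta> * \<mu> A" using eta by (rule mult_left_mono)
      ultimately show ?thesis by (simp add: algebra_simps)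
    qed
  qed
  have "lsum \<mu> g P \<le> (\<Sum>A\<in>P. \<mu> A - \<eta> * \<mu> (A - G))"
    unfolding lsum_def by (rule sum_mono) (use each in auto)
  also have "\<dots> = (\<Sum>A\<in>P. \<mu> A) - \<eta> * (\<Sum>A\<in>P. \<mu> (A - G))"
    by (simp add: sum_subtractf sum_distrib_left)
  also have "(\<Sum>A\<in>P. \<mu> A) = \<mu> Mt" using partition_sum[OF pos P] .
  also have "(\<Sum>A\<in>P. \<mu> (A - G)) = \<mu> (\<Union>A\<in>P. A - G)"
    apply (rule pba_sum[OF pos Pp(1), symmetric])
    using Pp by (auto simp: pairwise_def disjnt_def)
  also have "(\<Union>A\<in>P. A - G) = Mt - G" using Pp(2) by auto
  finally show ?thesis unfolding G_def .
qed

lemma lsum_lower: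
  assumes pos: "positive_ba \<mu>" and S: "S \<subseteq> Mt"
    and gb: "\<And>z. z \<in> Mt \<Longrightarrow> -1 \<le> g z" and c: "\<And>z. z \<in> S \<Longrightarrow> c \<le> g z"
  shows "\<exists>P\<in>Mt_partitions. lsum \<mu> g P \<ge> c * \<mu> S - \<mu> (Mt - S)"
proof (cases "Mt = ({}::('a\<times>'a) set)")
  case True
  then have "S = {}" using S by auto
  then show ?thesis using True pba_empty[OF pos]
    by (intro bexI[of _ "{}"]) (auto simp: Mt_partitions_def lsum_def)
next
  case False
  define P where "P = {S, Mt - S} - {{}}"
  have SD: "S \<noteq> Mt - S" using False S by auto
  have PP: "P \<in> Mt_partitions" using S
    by (auto simp: Mt_partitions_def P_def pairwise_def disjnt_def)
  have h0: "Inf (g ` {}) * \<mu> {} = 0" using pba_empty[OF pos] by simp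
  have "lsum \<mu> g P = (\<Sum>A\<in>{S, Mt - S}. Inf (g ` A) * \<mu> A)"
    unfolding lsum_def P_def by (rule sum.mono_neutral_left) (use h0 in auto)
  also have "\<dots> = Inf (g ` S) * \<mu> S + Inf (g ` (Mt - S)) * \<mu> (Mt - S)"
    using SD by simp
  finally have eq: "lsum \<mu> g P = Inf (g ` S) * \<mu> S + Inf (g ` (Mt - S)) * \<mu> (Mt - S)" .
  have t1: "Inf (g ` S) * \<mu> S \<ge> c * \<mu> S"
  proof (cases "S = {}")
    case True then show ?thesis using pba_empty[OF pos] by simp
  next
    case False
    have "c \<le> Inf (g ` S)" using False c by (auto intro: cInf_greatest)
    then show ?thesis using pba_nonneg[OF pos S] by (intro mult_right_mono) auto
  qed
  have t2: "Inf (g ` (Mt - S)) * \<mu> (Mt - S) \<ge> -1 * \<mu> (Mt - S)"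
  proof (cases "Mt - S = {}")
    case True
    then have "\<mu> (Mt - S) = 0" by (simp only: True pba_empty[OF pos])
    then show ?thesis by simp
  next
    case False
    have "-1 \<le> Inf (g ` (Mt - S))" using False gb by (auto intro: cInf_greatest)
    then show ?thesis using pba_nonneg[OF pos, of "Mt - S"] by (intro mult_right_mono) auto
  qed
  show ?thesis using PP eq t1 t2 by (intro bexI[of _ P]) auto
qed

lemma lsum_le:
  assumes pos: "positive_ba \<mu>" and P: "P \<in> Mt_partitions"
    and gb: "\<And>z. z \<in> Mt \<Longrightarrow> -1 \<le> g z \<and> g z \<le> 1"
  shows "lsum \<mu> g P \<le> \<mu> Mt"
  using lsum_upper[of \<mu> P g 0] assms by auto

lemma lsum_bdd:
  assumes pos: "positive_ba \<mu>" and gb: "\<And>z. z \<in> Mt \<Longrightarrow> -1 \<le> g z \<and> g z \<le> 1"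
  shows "bdd_above {lsum \<mu> g P | P. P \<in> Mt_partitions}"
  using lsum_le[of \<mu> _ g] assms by (auto intro!: bdd_aboveI[of _ "\<mu> Mt"])

lemma int_ge_lsum:
  assumes pos: "positive_ba \<mu>" and gb: "\<And>z. z \<in> Mt \<Longrightarrow> -1 \<le> g z \<and> g z \<le> 1"
    and P: "P \<in> Mt_partitions"
  shows "lsum \<mu> g P \<le> ba_integral \<mu> g"
  unfolding ba_integral_def lsum_def[symmetric]
  by (rule cSup_upper) (use P lsum_bdd[of \<mu> g] assms in auto)

lemma int_le:
  fixes \<mu> :: "('a \<times> 'a) set \<Rightarrow> real"
  assumes pos: "positive_ba \<mu>" and gb: "\<And>z. z \<in> Mt \<Longrightarrow> -1 \<le> g z \<and> g z \<le> 1"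
  shows "ba_integral \<mu> g \<le> \<mu> Mt"
  unfolding ba_integral_def lsum_def[symmetric]
proof (rule cSup_least)
  obtain P0 where "P0 \<in> (Mt_partitions :: (('a \<times> 'a) set set set))" using partitions_ex by blast
  then show "{lsum \<mu> g P |P. P \<in> Mt_partitions} \<noteq> {}" by auto
next
  fix x assume "x \<in> {lsum \<mu> g P |P. P \<in> Mt_partitions}"
  then show "x \<le> \<mu> Mt" using lsum_le[of \<mu> _ g] assms by auto
qed

lemma int_ge:
  assumes pos: "positive_ba \<mu>" and gb: "\<And>z. z \<in> Mt \<Longrightarrow> -1 \<le> g z \<and> g z \<le> 1"
  shows "- \<mu> Mt \<le> ba_integral \<mu> g"
proof -
  obtain P where P: "P \<in> Mt_partitions" "lsum \<mu> g P \<ge> -1 * \<mu> Mt - \<mu> (Mt - Mt)"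
    using lsum_lower[of \<mu> Mt g "-1"] pos gb by auto
  then show ?thesis using int_ge_lsum[of \<mu> g P] pos gb pba_empty[OF pos] by simp
qed

lemma int_gt_ex:
  assumes pos: "positive_ba \<mu>" and gb: "\<And>z. z \<in> Mt \<Longrightarrow> -1 \<le> g z \<and> g z \<le> 1"
    and "x < ba_integral \<mu> g"
  shows "\<exists>P\<in>Mt_partitions. x < lsum \<mu> g P"
proof (rule ccontr)
  assume "\<not> ?thesis"
  then have "\<forall>P\<in>Mt_partitions. lsum \<mu> g P \<le> x" by auto
  moreover obtain P0 where "P0 \<in> (Mt_partitions :: (('a \<times> 'a) set set set))" using partitions_ex by blast
  ultimately have "ba_integral \<mu> g \<le> x"
    unfolding ba_integral_def lsum_def[symmetric] by (intro cSup_least) auto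
  then show False using assms(3) by simp
qed



lemma ball_lip: "f \<in> Lip0_ball p \<Longrightarrow> \<bar>f x - f y\<bar> \<le> dist x y"
  unfolding Lip0_ball_def lipschitz_on_def by (auto simp: dist_real_def)

lemma deLeeuw_bound:
  assumes "f \<in> Lip0_ball p" "z \<in> Mt"
  shows "-1 \<le> deLeeuw f z \<and> deLeeuw f z \<le> 1"
proof -
  obtain x y where z: "z = (x, y)" by (cases z)
  have "x \<noteq> y" using assms(2) z by (auto simp: Mt_def)
  then have d: "dist x y > 0" by simp
  have "\<bar>f x - f y\<bar> \<le> dist x y" using ball_lip[OF assms(1)] .
  then have h: "- dist x y \<le> f x - f y" "f x - f y \<le> dist x y" by linarith+
  have "-1 \<le> (f x - f y) / dist x y" using h(1) d by (simp add: le_divide_eq)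
  moreover have "(f x - f y) / dist x y \<le> 1" using h(2) d by (simp add: divide_le_eq)
  ultimately show ?thesis unfolding z deLeeuw_def by simp
qed

lemma zero_ball: "(\<lambda>x. 0) \<in> Lip0_ball p"
  unfolding Lip0_ball_def lipschitz_on_def by auto

lemma uminus_ball: "f \<in> Lip0_ball p \<Longrightarrow> (\<lambda>x. - f x) \<in> Lip0_ball p"
  unfolding Lip0_ball_def lipschitz_on_def by (simp add: dist_minus)

lemma deLeeuw_uminus: "deLeeuw (\<lambda>x. - f x) z = - deLeeuw f z"
  by (cases z) (simp add: deLeeuw_def minus_divide_left)

lemma phi_bdd:
  assumes pos: "positive_ba \<mu>"
  shows "bdd_above {\<bar>ba_integral \<mu> (deLeeuw f)\<bar> | f. f \<in> Lip0_ball p}"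
proof (rule bdd_aboveI[of _ "\<mu> Mt"])
  fix x assume "x \<in> {\<bar>ba_integral \<mu> (deLeeuw f)\<bar> | f. f \<in> Lip0_ball p}"
  then obtain f where f: "f \<in> Lip0_ball p" "x = \<bar>ba_integral \<mu> (deLeeuw f)\<bar>" by auto
  have gb: "\<And>z. z \<in> Mt \<Longrightarrow> -1 \<le> deLeeuw f z \<and> deLeeuw f z \<le> 1"
    using deLeeuw_bound[OF f(1)] by blast
  have "ba_integral \<mu> (deLeeuw f) \<le> \<mu> Mt" by (rule int_le[of \<mu> "deLeeuw f", OF pos gb])
  moreover have "- \<mu> Mt \<le> ba_integral \<mu> (deLeeuw f)" by (rule int_ge[of \<mu> "deLeeuw f", OF pos gb])
  ultimately show "x \<le> \<mu> Mt" using f(2) by linarith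
qed

lemma phi_le:
  assumes pos: "positive_ba \<mu>"
  shows "Phi_star_norm p \<mu> \<le> \<mu> Mt"
  unfolding Phi_star_norm_def
proof (rule cSup_least)
  show "{\<bar>ba_integral \<mu> (deLeeuw f)\<bar> | f. f \<in> Lip0_ball p} \<noteq> {}" using zero_ball by blast
next
  fix x assume "x \<in> {\<bar>ba_integral \<mu> (deLeeuw f)\<bar> | f. f \<in> Lip0_ball p}"
  then obtain f where f: "f \<in> Lip0_ball p" "x = \<bar>ba_integral \<mu> (deLeeuw f)\<bar>" by auto
  have gb: "\<And>z. z \<in> Mt \<Longrightarrow> -1 \<le> deLeeuw f z \<and> deLeeuw f z \<le> 1"
    using deLeeuw_bound[OF f(1)] by blast
  have "ba_integral \<mu> (deLeeuw f) \<le> \<mu> Mt" by (rule int_le[of \<mu> "deLeeuw f", OF pos gb])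
  moreover have "- \<mu> Mt \<le> ba_integral \<mu> (deLeeuw f)" by (rule int_ge[of \<mu> "deLeeuw f", OF pos gb])
  ultimately show "x \<le> \<mu> Mt" using f(2) by linarith
qed

lemma phi_ge:
  assumes pos: "positive_ba \<mu>" and f: "f \<in> Lip0_ball p"
  shows "\<bar>ba_integral \<mu> (deLeeuw f)\<bar> \<le> Phi_star_norm p \<mu>"
  unfolding Phi_star_norm_def
  by (rule cSup_upper) (use f phi_bdd[OF pos, of p] in auto)

lemma ii_to_i:
  assumes pos: "positive_ba \<mu>"
    and H: "\<forall>\<gamma>. 0 < \<gamma> \<and> \<gamma> < 1 \<longrightarrow>
                 (\<exists>B f. B \<subseteq> Mt \<and> f \<in> Lip0_ball p \<and> \<mu> B \<ge> \<gamma> * \<mu> Mt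
                        \<and> (\<forall>xy\<in>B. deLeeuw f xy = 1))"
  shows "Phi_star_norm p \<mu> = \<mu> Mt"
proof -
  let ?m = "\<mu> Mt" and ?F = "Phi_star_norm p \<mu>"
  have low: "(2 * \<gamma> - 1) * ?m \<le> ?F" if g: "0 < \<gamma>" "\<gamma> < 1" for \<gamma>
  proof -
    obtain B f where B: "B \<subseteq> Mt" "f \<in> Lip0_ball p" "\<mu> B \<ge> \<gamma> * ?m" "\<forall>xy\<in>B. deLeeuw f xy = 1"
      using H g by blast
    have gb: "\<And>z. z \<in> Mt \<Longrightarrow> -1 \<le> deLeeuw f z \<and> deLeeuw f z \<le> 1"
      using deLeeuw_bound[OF B(2)] by blast
    obtain P where P: "P \<in> Mt_partitions" "lsum \<mu> (deLeeuw f) P \<ge> 1 * \<mu> B - \<mu> (Mt - B)"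
    proof -
      have gl: "\<And>z. z \<in> Mt \<Longrightarrow> -1 \<le> deLeeuw f z" using gb by blast
      have c1: "\<And>z. z \<in> B \<Longrightarrow> 1 \<le> deLeeuw f z" using B(4) by simp
      show ?thesis using lsum_lower[of \<mu> B "deLeeuw f" 1, OF pos B(1) gl c1] that by blast
    qed
    have "\<mu> (Mt - B) = ?m - \<mu> B" using pba_diff[OF pos B(1)] by simp
    then have "2 * \<mu> B - ?m \<le> ba_integral \<mu> (deLeeuw f)"
      using P int_ge_lsum[of \<mu> "deLeeuw f", OF pos gb P(1)] by linarith
    also have "\<dots> \<le> ?F" using phi_ge[OF pos B(2)] by simp
    finally show ?thesis using B(3) by (simp add: algebra_simps)
  qed
  have "?F \<ge> 0" using phi_ge[OF pos zero_ball, of p] by simp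
  have "?m \<le> ?F"
  proof (rule ccontr)
    assume "\<not> ?m \<le> ?F"
    then have lt: "?F < ?m" by simp
    with \<open>?F \<ge> 0\<close> have mpos: "?m > 0" by simp
    define \<gamma> where "\<gamma> = 1 - (?m - ?F) / (4 * ?m)"
    have "(?m - ?F) / (4 * ?m) < 1" using mpos lt \<open>?F \<ge> 0\<close> by (simp add: divide_less_eq)
    moreover have "(?m - ?F) / (4 * ?m) > 0" using mpos lt by simp
    ultimately have "0 < \<gamma>" "\<gamma> < 1" unfolding \<gamma>_def by auto
    then have "(2 * \<gamma> - 1) * ?m \<le> ?F" by (rule low)
    moreover have "(2 * \<gamma> - 1) * ?m = ?m - (?m - ?F) / 2" unfolding \<gamma>_def using mpos
      by (simp add: field_simps)
    ultimately show False using lt by (simp add: field_simps)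
  qed
  then show ?thesis using phi_le[OF pos, of p] by simp
qed

lemma i_to_G:
  assumes pos: "positive_ba \<mu>" and F: "Phi_star_norm p \<mu> = \<mu> Mt"
    and eps: "0 < \<epsilon>" and eta: "0 < \<eta>"
  shows "\<exists>f\<in>Lip0_ball p. \<mu> (Mt - {z\<in>Mt. deLeeuw f z > 1 - \<eta>}) < \<epsilon>"
proof -
  let ?m = "\<mu> Mt"
  define \<delta> where "\<delta> = \<eta> * \<epsilon>"
  have dpos: "\<delta> > 0" using eps eta by (simp add: \<delta>_def)
  have "?m - \<delta> < Sup {\<bar>ba_integral \<mu> (deLeeuw f)\<bar> | f. f \<in> Lip0_ball p}"
    using F dpos by (simp add: Phi_star_norm_def)
  moreover have ne: "{\<bar>ba_integral \<mu> (deLeeuw f)\<bar> | f. f \<in> Lip0_ball p} \<noteq> {}"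
    using zero_ball[of p] by blast
  ultimately obtain x where "x \<in> {\<bar>ba_integral \<mu> (deLeeuw f)\<bar> | f. f \<in> Lip0_ball p}" "?m - \<delta> < x"
    using less_cSup_iff[OF ne phi_bdd[OF pos, of p]] by blast
  then obtain f where f: "f \<in> Lip0_ball p" "?m - \<delta> < \<bar>ba_integral \<mu> (deLeeuw f)\<bar>"
    by blast
  have gb: "\<And>z. z \<in> Mt \<Longrightarrow> -1 \<le> deLeeuw f z \<and> deLeeuw f z \<le> 1"
    using deLeeuw_bound[OF f(1)] by blast
  show ?thesis
  proof (cases "ba_integral \<mu> (deLeeuw f) \<ge> 0")
    case True
    then have "?m - \<delta> < ba_integral \<mu> (deLeeuw f)" using f(2) by simp
    then obtain P where P: "P \<in> Mt_partitions" "?m - \<delta> < lsum \<mu> (deLeeuw f) P"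
      using int_gt_ex[of \<mu> "deLeeuw f", OF pos gb] by blast
    have "lsum \<mu> (deLeeuw f) P \<le> ?m - \<eta> * \<mu> (Mt - {z\<in>Mt. deLeeuw f z > 1 - \<eta>})"
      using lsum_upper[of \<mu> P "deLeeuw f" \<eta>, OF pos P(1) gb less_imp_le[OF eta]] .
    then have "\<eta> * \<mu> (Mt - {z\<in>Mt. deLeeuw f z > 1 - \<eta>}) < \<eta> * \<epsilon>"
      using P(2) by (simp add: \<delta>_def)
    then have "\<mu> (Mt - {z\<in>Mt. deLeeuw f z > 1 - \<eta>}) < \<epsilon>" using eta by simp
    then show ?thesis using f(1) by (rule rev_bexI[rotated])
  next
    case False
    then have I: "ba_integral \<mu> (deLeeuw f) < - ?m + \<delta>" using f(2) by simp
    define S where "S = {z\<in>Mt. deLeeuw f z \<ge> -1 + \<eta>}"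
    have SM: "S \<subseteq> Mt" by (auto simp: S_def)
    obtain P where P: "P \<in> Mt_partitions" "lsum \<mu> (deLeeuw f) P \<ge> (-1 + \<eta>) * \<mu> S - \<mu> (Mt - S)"
      using lsum_lower[of \<mu> S "deLeeuw f" "-1 + \<eta>"] pos SM gb by (auto simp: S_def)
    have "\<mu> (Mt - S) = ?m - \<mu> S" using pba_diff[OF pos SM] by simp
    then have "-?m + \<eta> * \<mu> S < -?m + \<delta>"
      using P int_ge_lsum[of \<mu> "deLeeuw f" P] pos gb I by (auto simp: algebra_simps)
    then have "\<mu> S < \<epsilon>" using eta by (simp add: \<delta>_def)
    moreover have "Mt - {z\<in>Mt. deLeeuw (\<lambda>x. - f x) z > 1 - \<eta>} = S"
      unfolding S_def deLeeuw_uminus by auto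
    ultimately have "\<mu> (Mt - {z\<in>Mt. deLeeuw (\<lambda>x. - f x) z > 1 - \<eta>}) < \<epsilon>" by simp
    then show ?thesis by (intro bexI[where x="\<lambda>x. - f x"] uminus_ball[OF f(1)])
  qed
qed



lemma floor_lip:
  assumes "\<bar>a - b\<bar> \<le> real k"
  shows "\<bar>real_of_int \<lfloor>a\<rfloor> - real_of_int \<lfloor>b\<rfloor>\<bar> \<le> real k"
proof -
  have "\<lfloor>a\<rfloor> \<le> \<lfloor>b\<rfloor> + int k"
  proof -
    have "real_of_int \<lfloor>a\<rfloor> < real_of_int (\<lfloor>b\<rfloor> + int k) + 1"
      using assms floor_le_iff[of a] real_of_int_floor_add_one_gt[of b] of_int_floor_le[of a] by linarith
    then show ?thesis by linarith
  qed
  moreover have "\<lfloor>b\<rfloor> \<le> \<lfloor>a\<rfloor> + int k"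
  proof -
    have "real_of_int \<lfloor>b\<rfloor> < real_of_int (\<lfloor>a\<rfloor> + int k) + 1"
      using assms real_of_int_floor_add_one_gt[of a] of_int_floor_le[of b] by linarith
    then show ?thesis by linarith
  qed
  ultimately have "\<bar>\<lfloor>a\<rfloor> - \<lfloor>b\<rfloor>\<bar> \<le> int k" by linarith
  then show ?thesis
    by (metis of_int_abs of_int_diff of_int_le_iff of_int_of_nat_eq)
qed

lemma floor_key:
  fixes a s :: real and k :: nat
  assumes "0 \<le> s" "\<lfloor>a - s + real k\<rfloor> - \<lfloor>a\<rfloor> \<noteq> int k"
  shows "a - s < real_of_int \<lfloor>a\<rfloor>"
proof (rule ccontr)
  assume "\<not> ?thesis"
  then have "\<lfloor>a\<rfloor> \<le> \<lfloor>a - s\<rfloor>" by (simp add: le_floor_iff)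
  moreover have "\<lfloor>a - s\<rfloor> \<le> \<lfloor>a\<rfloor>" using assms(1) by (intro floor_mono) simp
  ultimately have "\<lfloor>a - s\<rfloor> = \<lfloor>a\<rfloor>" by simp
  moreover have "\<lfloor>a - s + real k\<rfloor> = \<lfloor>a - s\<rfloor> + int k"
    by (metis floor_add_int of_int_of_nat_eq)
  ultimately show False using assms(2) by simp
qed

lemma two_floors:
  fixes a s :: real and j j' K :: nat
  assumes "j < j'" "j' < K" "0 \<le> s" "s < 1 / real K"
    and "a + real j / real K - s < real_of_int \<lfloor>a + real j / real K\<rfloor>"
    and "a + real j' / real K - s < real_of_int \<lfloor>a + real j' / real K\<rfloor>"
  shows False
proof -
  define N where "N = \<lfloor>a + real j / real K\<rfloor>"
  define N' where "N' = \<lfloor>a + real j' / real K\<rfloor>"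
  have K: "real K > 0" using assms by simp
  have h1: "real_of_int N \<le> a + real j / real K" unfolding N_def by simp
  have h2: "real_of_int N' \<le> a + real j' / real K" unfolding N'_def by simp
  have "real j' / real K - real j / real K = (real j' - real j) / real K" by (simp add: diff_divide_distrib)
  have jj: "real j + 1 \<le> real j'" "real j' - real j \<le> real K - 1" using assms by auto
  have "(real j' - real j) / real K \<ge> 1 / real K" using jj K by (simp add: divide_right_mono)
  have "(real j' - real j) / real K \<le> (real K - 1) / real K" using jj K by (simp add: divide_right_mono)
  also have "\<dots> = 1 - 1 / real K" using K by (simp add: field_simps)
  finally have u: "(real j' - real j) / real K \<le> 1 - 1 / real K" .
  have g1: "a + real j / real K - s < real_of_int N" using assms(5) unfolding N_def .
  have g2: "a + real j' / real K - s < real_of_int N'" using assms(6) unfolding N'_def .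
  have "real_of_int (N' - N) > 0"
    using g1 g2 h1 h2 \<open>(real j' - real j) / real K \<ge> 1 / real K\<close>
      \<open>real j' / real K - real j / real K = (real j' - real j) / real K\<close> assms(4)
    by linarith
  moreover have "real_of_int (N' - N) < 1"
    using g1 g2 h1 h2 u
      \<open>real j' / real K - real j / real K = (real j' - real j) / real K\<close> assms(4)
    by linarith
  ultimately have "0 < N' - N" "N' - N < 1" by linarith+
  then show False by linarith
qed



lemma rounding:
  fixes p :: "'a::metric_space" and \<mu> :: "('a \<times> 'a) set \<Rightarrow> real"
  assumes dist_int: "\<forall>x y :: 'a. \<exists>k::nat. k \<le> n \<and> dist x y = real k"
    and pos: "positive_ba \<mu>" and f: "f \<in> Lip0_ball p" and K: "K > 0" and eta: "\<eta> > 0"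
    and small: "real n * \<eta> \<le> 1 / real K"
  shows "\<exists>f'\<in>Lip0_ball p. \<mu> {z\<in>{z\<in>Mt. deLeeuw f z > 1 - \<eta>}. deLeeuw f' z = 1}
            \<ge> \<mu> {z\<in>Mt. deLeeuw f z > 1 - \<eta>} - \<mu> Mt / real K"
proof -
  define G where "G = {z\<in>Mt. deLeeuw f z > 1 - \<eta>}"
  have GM: "G \<subseteq> Mt" by (auto simp: G_def)
  define fr where "fr t = (\<lambda>x. real_of_int \<lfloor>f x + t\<rfloor> - real_of_int \<lfloor>f p + t\<rfloor>)" for t
  have frb: "fr t \<in> Lip0_ball p" for t
    unfolding Lip0_ball_def
  proof (intro CollectI conjI lipschitz_onI)
    show "fr t p = 0" by (simp add: fr_def)
  next
    fix x y :: 'a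
    obtain k where k: "dist x y = real k" using dist_int by blast
    have "\<bar>(f x + t) - (f y + t)\<bar> \<le> real k" using ball_lip[OF f, of x y] k by simp
    then have "\<bar>real_of_int \<lfloor>f x + t\<rfloor> - real_of_int \<lfloor>f y + t\<rfloor>\<bar> \<le> real k" by (rule floor_lip)
    then show "dist (fr t x) (fr t y) \<le> 1 * dist x y" using k by (simp add: fr_def dist_real_def)
  qed simp
  define D where "D j = {z\<in>G. deLeeuw (fr (real j / real K)) z \<noteq> 1}" for j :: nat
  have Dkey: "f (snd z) + real j / real K - (dist (fst z) (snd z) - (f (fst z) - f (snd z)))
                < real_of_int \<lfloor>f (snd z) + real j / real K\<rfloor>
              \<and> 0 \<le> dist (fst z) (snd z) - (f (fst z) - f (snd z))
              \<and> dist (fst z) (snd z) - (f (fst z) - f (snd z)) < 1 / real K"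
    if z: "z \<in> D j" for z j
  proof -
    obtain x y where xy: "z = (x, y)" by (cases z)
    have zG: "z \<in> G" using z by (simp add: D_def)
    then have "x \<noteq> y" using xy by (auto simp: G_def Mt_def)
    obtain k where k: "k \<le> n" "dist x y = real k" using dist_int by blast
    with \<open>x \<noteq> y\<close> have kpos: "real k > 0" by (metis dist_pos_lt)
    define t where "t = real j / real K"
    define s where "s = real k - (f x - f y)"
    have s0: "0 \<le> s" using ball_lip[OF f, of x y] k by (simp add: s_def)
    have "(f x - f y) / real k > 1 - \<eta>" using zG xy k by (simp add: G_def deLeeuw_def)
    then have "f x - f y > (1 - \<eta>) * real k" using kpos by (simp add: less_divide_eq)
    then have "s < \<eta> * real k" by (simp add: s_def algebra_simps)
    also have "\<dots> \<le> \<eta> * real n" using k eta by simp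
    finally have s1: "s < 1 / real K" using small by (simp add: mult.commute)
    have "deLeeuw (fr t) z \<noteq> 1" using z by (simp add: D_def t_def)
    then have "(real_of_int \<lfloor>f x + t\<rfloor> - real_of_int \<lfloor>f y + t\<rfloor>) / real k \<noteq> 1"
      using xy k by (simp add: deLeeuw_def fr_def)
    then have ne: "\<lfloor>f x + t\<rfloor> - \<lfloor>f y + t\<rfloor> \<noteq> int k" using kpos by auto
    have eqx: "(f y + t) - s + real k = f x + t" by (simp add: s_def)
    have "\<lfloor>(f y + t) - s + real k\<rfloor> - \<lfloor>f y + t\<rfloor> \<noteq> int k" unfolding eqx by (rule ne)
    then have "(f y + t) - s < real_of_int \<lfloor>f y + t\<rfloor>" using floor_key[OF s0] by blast
    then show ?thesis using s0 s1 xy k by (simp add: s_def t_def)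
  qed
  have Ddisj: "D i \<inter> D j = {}" if "i < K" "j < K" "i \<noteq> j" for i j
  proof (rule ccontr)
    assume "D i \<inter> D j \<noteq> {}"
    then obtain z where "z \<in> D i" "z \<in> D j" by blast
    note a = Dkey[OF this(1)] Dkey[OF this(2)]
    define aa where "aa = f (snd z)"
    define ss where "ss = dist (fst z) (snd z) - (f (fst z) - f (snd z))"
    note a = a[folded aa_def ss_def]
    show False
    proof (cases "i < j")
      case True
      show False by (rule two_floors[OF True that(2), where a=aa and s=ss]) (use a in auto)
    next
      case False
      then have "j < i" using that by simp
      show False by (rule two_floors[OF \<open>j < i\<close> that(1), where a=aa and s=ss]) (use a in auto)
    qed
  qed
  have DM: "D j \<subseteq> Mt" for j using GM by (auto simp: D_def)
  have "(\<Sum>j<K. \<mu> (D j)) = \<mu> (\<Union>j<K. D j)"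
    by (rule pba_sum[OF pos, symmetric]) (use DM Ddisj in auto)
  also have "\<dots> \<le> \<mu> Mt" using DM by (intro pba_mono[OF pos]) auto
  finally have sumle: "(\<Sum>j<K. \<mu> (D j)) \<le> \<mu> Mt" .
  obtain j where j: "j < K" "\<mu> (D j) \<le> \<mu> Mt / real K"
  proof (rule ccontr)
    assume "\<not> thesis"
    then have "\<forall>j<K. \<mu> Mt / real K < \<mu> (D j)" using that by force
    then have "(\<Sum>j<K. \<mu> Mt / real K) < (\<Sum>j<K. \<mu> (D j))"
      using K by (intro sum_strict_mono) auto
    also have "(\<Sum>j<K. \<mu> Mt / real K) = \<mu> Mt" using K by simp
    finally show False using sumle by simp
  qed
  have "{z\<in>G. deLeeuw (fr (real j / real K)) z = 1} = G - D j" by (auto simp: D_def)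
  moreover have "\<mu> (G - D j) = \<mu> G - \<mu> (D j)" by (rule pba_diff[OF pos _ GM]) (auto simp: D_def)
  ultimately have "\<mu> {z\<in>G. deLeeuw (fr (real j / real K)) z = 1} \<ge> \<mu> G - \<mu> Mt / real K"
    using j by simp
  then show ?thesis using frb unfolding G_def by blast
qed



lemma sum_rotate: "(\<Sum>i<(L::nat). h ((i + 1) mod L)) = (\<Sum>i<L. (h i :: real))"
proof (cases L)
  case 0 then show ?thesis by simp
next
  case (Suc M)
  have "(\<Sum>i<Suc M. h ((i + 1) mod Suc M)) = (\<Sum>i<M. h ((i + 1) mod Suc M)) + h 0"
    by (simp add: sum.lessThan_Suc)
  also have "(\<Sum>i<M. h ((i + 1) mod Suc M)) = (\<Sum>i<M. h (Suc i))"
    by (rule sum.cong) auto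
  also have "\<dots> + h 0 = (\<Sum>i<Suc M. h i)"
    by (simp only: sum.lessThan_Suc_shift)
  finally show ?thesis using Suc by simp
qed

lemma ii_to_iii:
  assumes B: "B \<subseteq> Mt" and f: "f \<in> Lip0_ball p" and one: "\<forall>xy\<in>B. deLeeuw f xy = 1"
  shows "cyclically_monotonic B"
  unfolding cyclically_monotonic_def
proof (intro allI impI)
  fix ps assume ps: "set ps \<subseteq> B"
  let ?L = "length ps"
  have e: "dist (fst (ps ! i)) (snd (ps ! i)) = f (fst (ps ! i)) - f (snd (ps ! i))" if "i < ?L" for i
  proof -
    have "ps ! i \<in> B" using ps that by auto
    then obtain x y where xy: "ps ! i = (x, y)" "(x, y) \<in> B" by (metis prod.collapse)
    then have "x \<noteq> y" using B by (auto simp: Mt_def)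
    then have "dist x y > 0" by simp
    moreover have "(f x - f y) / dist x y = 1" using one xy by (auto simp: deLeeuw_def)
    ultimately show ?thesis using xy by (simp add: divide_eq_1_iff)
  qed
  have "(\<Sum>i<?L. dist (fst (ps ! i)) (snd (ps ! i))) = (\<Sum>i<?L. f (fst (ps ! i))) - (\<Sum>i<?L. f (snd (ps ! i)))"
    using e by (simp add: sum_subtractf)
  also have "(\<Sum>i<?L. f (snd (ps ! i))) = (\<Sum>i<?L. f (snd (ps ! ((i + 1) mod ?L))))"
    using sum_rotate[of "\<lambda>i. f (snd (ps ! i))" ?L] by simp
  also have "(\<Sum>i<?L. f (fst (ps ! i))) - \<dots> = (\<Sum>i<?L. f (fst (ps ! i)) - f (snd (ps ! ((i + 1) mod ?L))))"
    by (simp add: sum_subtractf)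
  also have "\<dots> \<le> (\<Sum>i<?L. dist (fst (ps ! i)) (snd (ps ! ((i + 1) mod ?L))))"
    by (rule sum_mono) (use ball_lip[OF f] in \<open>simp add: abs_le_iff\<close>)
  finally show "(\<Sum>i<?L. dist (fst (ps ! i)) (snd (ps ! i)))
       \<le> (\<Sum>i<?L. dist (fst (ps ! i)) (snd (ps ! ((i + 1) mod ?L))))" .
qed

fun W :: "'a::metric_space \<Rightarrow> 'a \<Rightarrow> ('a \<times> 'a) list \<Rightarrow> real" where
  "W r z [] = dist z r"
| "W r z ((x, y) # ps) = dist z y - dist x y + W r x ps"

definition hdy :: "'a \<Rightarrow> ('a \<times> 'a) list \<Rightarrow> 'a" where
  "hdy r ps = (case ps of [] \<Rightarrow> r | q # _ \<Rightarrow> snd q)"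

definition nxt :: "'a \<Rightarrow> ('a \<times> 'a) list \<Rightarrow> nat \<Rightarrow> 'a" where
  "nxt r ps i = (if i + 1 < length ps then snd (ps ! (i + 1)) else r)"

lemma W_closed:
  "W r z ps + (\<Sum>i<length ps. dist (fst (ps ! i)) (snd (ps ! i)))
     = dist z (hdy r ps) + (\<Sum>i<length ps. dist (fst (ps ! i)) (nxt r ps i))"
proof (induction ps arbitrary: z)
  case Nil
  then show ?case by (simp add: hdy_def)
next
  case (Cons q qs)
  obtain x y where q: "q = (x, y)" by (cases q)
  have n0: "nxt r (q # qs) 0 = hdy r qs"
    by (cases qs) (auto simp: nxt_def hdy_def)
  have ns: "nxt r (q # qs) (Suc i) = nxt r qs i" for i
    by (simp add: nxt_def)
  have "W r z (q # qs) + (\<Sum>i<length (q # qs). dist (fst ((q # qs) ! i)) (snd ((q # qs) ! i)))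
      = dist z y - dist x y + (W r x qs + dist x y + (\<Sum>i<length qs. dist (fst (qs ! i)) (snd (qs ! i))))"
    by (simp add: q sum.lessThan_Suc_shift del: sum.lessThan_Suc)
  also have "\<dots> = dist z y + (W r x qs + (\<Sum>i<length qs. dist (fst (qs ! i)) (snd (qs ! i))))"
    by simp
  also have "\<dots> = dist z y + (dist x (hdy r qs) + (\<Sum>i<length qs. dist (fst (qs ! i)) (nxt r qs i)))"
    using Cons.IH by simp
  also have "\<dots> = dist z (hdy r (q # qs)) + (\<Sum>i<length (q # qs). dist (fst ((q # qs) ! i)) (nxt r (q # qs) i))"
    by (simp add: q sum.lessThan_Suc_shift n0[unfolded q] ns[unfolded q] hdy_def del: sum.lessThan_Suc)
  finally show ?case .
qed

lemma W_cyc: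
  assumes cm: "cyclically_monotonic B" and x0: "(x0, y0) \<in> B" and ps: "set ps \<subseteq> B"
  shows "dist x0 y0 \<le> W y0 x0 ps"
proof -
  define qs where "qs = (x0, y0) # ps"
  have "set qs \<subseteq> B" using x0 ps by (simp add: qs_def)
  then have c: "(\<Sum>i<length qs. dist (fst (qs ! i)) (snd (qs ! i)))
       \<le> (\<Sum>i<length qs. dist (fst (qs ! i)) (snd (qs ! ((i + 1) mod length qs))))"
    using cm unfolding cyclically_monotonic_def by blast
  have l: "(\<Sum>i<length qs. dist (fst (qs ! i)) (snd (qs ! i)))
     = dist x0 y0 + (\<Sum>i<length ps. dist (fst (ps ! i)) (snd (ps ! i)))"
    by (simp add: qs_def sum.lessThan_Suc_shift del: sum.lessThan_Suc)
  have r0: "snd (qs ! ((0 + 1) mod length qs)) = hdy y0 ps"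
    by (cases ps) (auto simp: qs_def hdy_def)
  have rs: "snd (qs ! ((Suc i + 1) mod length qs)) = nxt y0 ps i" if "i < length ps" for i
  proof (cases "i + 1 < length ps")
    case True
    then have "(Suc i + 1) mod length qs = Suc (Suc i)" by (simp add: qs_def)
    then show ?thesis using True by (simp add: qs_def nxt_def)
  next
    case False
    then have "Suc i + 1 = length qs" using that by (simp add: qs_def)
    then have "(Suc i + 1) mod length qs = 0" by simp
    then show ?thesis using False by (simp add: qs_def nxt_def)
  qed
  have "(\<Sum>i<length qs. dist (fst (qs ! i)) (snd (qs ! ((i + 1) mod length qs))))
     = dist x0 (snd (qs ! ((0 + 1) mod length qs)))
       + (\<Sum>i<length ps. dist (fst (qs ! Suc i)) (snd (qs ! ((Suc i + 1) mod length qs))))"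
    by (simp only: qs_def length_Cons sum.lessThan_Suc_shift) simp
  also have "\<dots> = dist x0 (hdy y0 ps) + (\<Sum>i<length ps. dist (fst (ps ! i)) (nxt y0 ps i))"
    using r0 rs by (simp add: qs_def)
  also have "\<dots> = W y0 x0 ps + (\<Sum>i<length ps. dist (fst (ps ! i)) (snd (ps ! i)))"
    using W_closed[of y0 x0 ps] by simp
  finally show ?thesis using c l by simp
qed

lemma W_lip: "W r z ps \<le> W r z' ps + dist z z'"
proof (cases ps)
  case Nil then show ?thesis using dist_triangle[of z r z'] by simp
next
  case (Cons q qs)
  obtain x y where q: "q = (x, y)" by (cases q)
  show ?thesis using dist_triangle[of z y z'] by (simp add: Cons q)
qed



lemma potential:
  fixes B :: "('a::metric_space \<times> 'a) set"
  assumes B: "B \<subseteq> Mt" and cm: "cyclically_monotonic B"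
  shows "\<exists>f\<in>Lip0_ball p. \<forall>xy\<in>B. deLeeuw f xy = 1"
proof (cases "B = {}")
  case True
  then show ?thesis using zero_ball by blast
next
  case False
  then obtain x0 y0 where b0: "(x0, y0) \<in> B" by auto
  define S where "S z = {W y0 z ps | ps. set ps \<subseteq> B}" for z
  define f0 where "f0 z = Inf (S z)" for z
  have Sne: "S z \<noteq> {}" for z unfolding S_def by (auto intro!: exI[of _ "[]"])
  have Sbdd: "bdd_below (S z)" for z
  proof (rule bdd_belowI[of _ "dist x0 y0 - dist x0 z"])
    fix w assume "w \<in> S z"
    then obtain ps where ps: "set ps \<subseteq> B" "w = W y0 z ps" by (auto simp: S_def)
    have "dist x0 y0 \<le> W y0 x0 ps" by (rule W_cyc[OF cm b0 ps(1)])
    also have "\<dots> \<le> W y0 z ps + dist x0 z" by (rule W_lip)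
    finally show "dist x0 y0 - dist x0 z \<le> w" using ps by simp
  qed
  have f0le: "f0 z \<le> W y0 z ps" if "set ps \<subseteq> B" for z ps
    unfolding f0_def by (rule cInf_lower) (use that Sbdd in \<open>auto simp: S_def\<close>)
  have f0ge: "c \<le> f0 z" if "\<And>ps. set ps \<subseteq> B \<Longrightarrow> c \<le> W y0 z ps" for c z
    unfolding f0_def by (rule cInf_greatest[OF Sne]) (use that in \<open>auto simp: S_def\<close>)
  have lip: "f0 z - dist z z' \<le> f0 z'" for z z'
  proof (rule f0ge)
    fix ps assume ps: "set ps \<subseteq> B"
    have "f0 z \<le> W y0 z ps" by (rule f0le[OF ps])
    also have "\<dots> \<le> W y0 z' ps + dist z z'" by (rule W_lip)
    finally show "f0 z - dist z z' \<le> W y0 z' ps" by simp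
  qed
  have onB: "f0 y + dist x y \<le> f0 x" if xy: "(x, y) \<in> B" for x y
  proof (rule f0ge)
    fix ps assume ps: "set ps \<subseteq> B"
    have "f0 y \<le> W y0 y ((x, y) # ps)" by (rule f0le) (use ps xy in auto)
    then show "f0 y + dist x y \<le> W y0 x ps" by simp
  qed
  define f where "f z = f0 z - f0 p" for z
  have fb: "f \<in> Lip0_ball p"
    unfolding Lip0_ball_def
  proof (intro CollectI conjI lipschitz_onI)
    show "f p = 0" by (simp add: f_def)
  next
    fix x y :: 'a
    have "f0 x - dist x y \<le> f0 y" "f0 y - dist y x \<le> f0 x" using lip by auto
    then show "dist (f x) (f y) \<le> 1 * dist x y" by (simp add: f_def dist_real_def dist_commute abs_le_iff)
  qed simp
  have "deLeeuw f xy = 1" if "xy \<in> B" for xy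
  proof -
    obtain x y where xy: "xy = (x, y)" by (cases xy)
    have "x \<noteq> y" using that xy B by (auto simp: Mt_def)
    then have d: "dist x y > 0" by simp
    have "f0 x - dist x y \<le> f0 y" using lip by auto
    moreover have "f0 y + dist x y \<le> f0 x" using onB that xy by simp
    ultimately have "f x - f y = dist x y" by (simp add: f_def)
    then show ?thesis using d xy by (simp add: deLeeuw_def)
  qed
  then show ?thesis using fb by blast
qed

lemma lin_aux: "G - q \<le> X \<Longrightarrow> m - (m - c) / 2 < G \<Longrightarrow> 4 * q \<le> m - c \<Longrightarrow> c \<le> m \<Longrightarrow> c \<le> (X::real)"
  by (simp add: field_simps)

lemma i_to_ii:
  fixes p :: "'a::metric_space" and \<mu> :: "('a \<times> 'a) set \<Rightarrow> real"
  assumes dist_int: "\<forall>x y :: 'a. \<exists>k::nat. k \<le> n \<and> dist x y = real k"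
    and pos: "positive_ba \<mu>" and F: "Phi_star_norm p \<mu> = \<mu> Mt"
    and g: "0 < \<gamma>" "\<gamma> < 1"
  shows "\<exists>B f. B \<subseteq> Mt \<and> f \<in> Lip0_ball p \<and> \<mu> B \<ge> \<gamma> * \<mu> Mt \<and> (\<forall>xy\<in>B. deLeeuw f xy = 1)"
proof -
  let ?m = "\<mu> Mt"
  have m0: "?m \<ge> 0" using pba_nonneg[OF pos] by simp
  show ?thesis
  proof (cases "?m = 0")
    case True
    then show ?thesis using zero_ball[of p] pba_empty[OF pos] by (intro exI[of _ "{}"]) auto
  next
    case False
    then have mpos: "?m > 0" using m0 by simp
    obtain K :: nat where K: "4 / (1 - \<gamma>) < real K" using reals_Archimedean2 by blast
    have "4 / (1 - \<gamma>) > 0" using g by simp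
    then have Kpos: "K > 0" using K by (metis of_nat_0_less_iff order_less_trans)
    have Kinv: "1 / real K \<le> (1 - \<gamma>) / 4"
    proof -
      have "4 < real K * (1 - \<gamma>)" using K g by (simp add: divide_less_eq mult.commute)
      then show ?thesis using Kpos g by (simp add: field_simps)
    qed
    define \<eta> where "\<eta> = 1 / (real K * (real n + 1))"
    have eta: "\<eta> > 0" using Kpos by (simp add: \<eta>_def)
    have small: "real n * \<eta> \<le> 1 / real K"
    proof -
      have "real n * \<eta> = real n / (real K * (real n + 1))" by (simp add: \<eta>_def)
      also have "\<dots> \<le> (real n + 1) / (real K * (real n + 1))"
        by (rule divide_right_mono) auto
      also have "\<dots> = 1 / real K" by simp
      finally show ?thesis .
    qed
    define \<epsilon> where "\<epsilon> = (1 - \<gamma>) * ?m / 2"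
    have eps: "\<epsilon> > 0" using g mpos by (simp add: \<epsilon>_def)
    obtain f where f: "f \<in> Lip0_ball p" "\<mu> (Mt - {z\<in>Mt. deLeeuw f z > 1 - \<eta>}) < \<epsilon>"
      using i_to_G[OF pos F eps eta] by blast
    define G where "G = {z\<in>Mt. deLeeuw f z > 1 - \<eta>}"
    have GM: "G \<subseteq> Mt" by (auto simp: G_def)
    have "\<mu> (Mt - G) = ?m - \<mu> G" using pba_diff[OF pos GM] by simp
    then have muG: "\<mu> G > ?m - \<epsilon>" using f(2) by (simp add: G_def)
    obtain f' where f': "f' \<in> Lip0_ball p" "\<mu> {z\<in>G. deLeeuw f' z = 1} \<ge> \<mu> G - ?m / real K"
      using rounding[OF dist_int pos f(1) Kpos eta small] unfolding G_def by blast
    have "?m / real K \<le> ?m * ((1 - \<gamma>) / 4)"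
      using Kinv mpos by (metis divide_inverse inverse_eq_divide mult_left_mono less_imp_le)
    then have q: "4 * (?m / real K) \<le> ?m - \<gamma> * ?m" by (simp add: algebra_simps)
    have gm: "\<gamma> * ?m \<le> ?m" using g mpos by simp
    have muG': "\<mu> G > ?m - (?m - \<gamma> * ?m) / 2" using muG by (simp add: \<epsilon>_def algebra_simps)
    have "\<mu> {z\<in>G. deLeeuw f' z = 1} \<ge> \<gamma> * ?m"
      by (rule lin_aux[OF f'(2) muG' q gm])
    moreover have "{z\<in>G. deLeeuw f' z = 1} \<subseteq> Mt" using GM by auto
    ultimately show ?thesis using f'(1) by blast
  qed
qed

theorem proposition2p8:
  fixes p :: "'a::metric_space" and n :: nat
    and \<mu> :: "('a \<times> 'a) set \<Rightarrow> real"
  assumes dist_int: "\<forall>x y :: 'a. \<exists>k::nat. k \<le> n \<and> dist x y = real k"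
    and pos: "positive_ba \<mu>"
  shows "(Phi_star_norm p \<mu> = ba_norm \<mu>
          \<longleftrightarrow> (\<forall>\<gamma>. 0 < \<gamma> \<and> \<gamma> < 1 \<longrightarrow>
                 (\<exists>B f. B \<subseteq> Mt \<and> f \<in> Lip0_ball p \<and> \<mu> B \<ge> \<gamma> * \<mu> Mt
                        \<and> (\<forall>xy\<in>B. deLeeuw f xy = 1))))
      \<and> (Phi_star_norm p \<mu> = ba_norm \<mu>
          \<longleftrightarrow> (\<forall>\<gamma>. 0 < \<gamma> \<and> \<gamma> < 1 \<longrightarrow>
                 (\<exists>B. B \<subseteq> Mt \<and> cyclically_monotonic B \<and> \<mu> B \<ge> \<gamma> * \<mu> Mt)))"
proof -
  let ?ii = "\<forall>\<gamma>. 0 < \<gamma> \<and> \<gamma> < 1 \<longrightarrow>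
                 (\<exists>B f. B \<subseteq> Mt \<and> f \<in> Lip0_ball p \<and> \<mu> B \<ge> \<gamma> * \<mu> Mt
                        \<and> (\<forall>xy\<in>B. deLeeuw f xy = 1))"
  let ?iii = "\<forall>\<gamma>. 0 < \<gamma> \<and> \<gamma> < 1 \<longrightarrow>
                 (\<exists>B. B \<subseteq> Mt \<and> cyclically_monotonic B \<and> \<mu> B \<ge> \<gamma> * \<mu> Mt)"
  have nrm: "ba_norm \<mu> = \<mu> Mt" by (rule ba_norm_eq[OF pos])
  have A: "Phi_star_norm p \<mu> = ba_norm \<mu> \<longleftrightarrow> ?ii"
  proof
    assume "Phi_star_norm p \<mu> = ba_norm \<mu>"
    then show ?ii using i_to_ii[OF dist_int pos] nrm by auto
  next
    assume ?ii
    then show "Phi_star_norm p \<mu> = ba_norm \<mu>" using ii_to_i[OF pos] nrm by auto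
  qed
  have C: "?ii \<longleftrightarrow> ?iii"
  proof
    assume H: ?ii
    show ?iii
    proof (intro allI impI)
      fix \<gamma> :: real assume "0 < \<gamma> \<and> \<gamma> < 1"
      then obtain B f where "B \<subseteq> Mt" "f \<in> Lip0_ball p" "\<mu> B \<ge> \<gamma> * \<mu> Mt" "\<forall>xy\<in>B. deLeeuw f xy = 1"
        using H by blast
      then show "\<exists>B. B \<subseteq> Mt \<and> cyclically_monotonic B \<and> \<mu> B \<ge> \<gamma> * \<mu> Mt"
        using ii_to_iii by blast
    qed
  next
    assume H: ?iii
    show ?ii
    proof (intro allI impI)
      fix \<gamma> :: real assume "0 < \<gamma> \<and> \<gamma> < 1"
      then obtain B where B: "B \<subseteq> Mt" "cyclically_monotonic B" "\<mu> B \<ge> \<gamma> * \<mu> Mt"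
        using H by blast
      then obtain f where "f \<in> Lip0_ball p" "\<forall>xy\<in>B. deLeeuw f xy = 1"
        using potential[OF B(1,2), of p] by blast
      then show "\<exists>B f. B \<subseteq> Mt \<and> f \<in> Lip0_ball p \<and> \<mu> B \<ge> \<gamma> * \<mu> Mt \<and> (\<forall>xy\<in>B. deLeeuw f xy = 1)"
        using B by blast
    qed
  qed
  show ?thesis using A C by blast
qed

end
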